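(* Let $h$ be a penalty function on $\Delta$ with choice map $Q$ and let $p\in\Delta$. If $F_h(p,y_j)\to+\infty$ for some sequence $y_j\in\mathbb{R}^n$, then the sequence $x_j=Q(y_j)$ has no limit points in $\Delta_p$; in particular, $\liminf_{j\to\infty}\min\{x_{j,\alpha}:\alpha\in\operatorname{supp}(p)\}=0$.
   Context: $\Delta$ is the unit simplex of $\mathbb{R}^n$. A penalty function on $\Delta$ is $h:\Delta\to\mathbb{R}$, continuous, $C^\infty$ on the relative interior of every face of $\Delta$, and strongly convex: $h(tx_1+(1-t)x_2)\le th(x_1)+(1-t)h(x_2)-\tfrac12Kt(1-t)\|x_1-x_2\|^2$ for some $K>0$. $Q(y)=\arg\max_{x\in\Delta}\{\langle y,x\rangle-h(x)\}$; $h^*(y)=\max_{x\in\Delta}\{\langle y,x\rangle-h(x)\}$; Fenchel coupling $F_h(p,y)=h(p)+h^*(y)-\langle y,p\rangle$. $\Delta_p=\{x\in\Delta:\operatorname{supp}(x)\supseteq\operatorname{supp}(p)\}$. *)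

theory Defs
  imports "HOL-Analysis.Analysis"
begin

definition unit_simplex :: "(real^'n) set" where
  "unit_simplex = {x. (\<forall>i. 0 \<le> x $ i) \<and> (\<Sum>i\<in>UNIV. x $ i) = 1}"

definition supp :: "real^'n \<Rightarrow> 'n set" where
  "supp x = {i. x $ i \<noteq> 0}"

(* relative interior of the face of the unit_simplex spanned by the vertices in S *)
definition face_relint :: "'n set \<Rightarrow> (real^'n) set" where
  "face_relint S = {x \<in> unit_simplex. supp x = S}"

fun Ck_on :: "nat \<Rightarrow> (real^'n) set \<Rightarrow> (real^'n \<Rightarrow> real) \<Rightarrow> bool" where
  "Ck_on 0 U f = continuous_on U f"
| "Ck_on (Suc k) U f = (f differentiable_on U \<and>
      (\<forall>i. Ck_on k U (\<lambda>x. frechet_derivative f (at x) (axis i 1))))"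

definition Cinf_on :: "(real^'n) set \<Rightarrow> (real^'n \<Rightarrow> real) \<Rightarrow> bool" where
  "Cinf_on U f = (open U \<and> (\<forall>k. Ck_on k U f))"

(* h is C^infinity on the set A (a relatively open subset of an affine subspace)
   in the sense of admitting local smooth extensions *)
definition smooth_on_set :: "(real^'n) set \<Rightarrow> (real^'n \<Rightarrow> real) \<Rightarrow> bool" where
  "smooth_on_set A h = (\<forall>x\<in>A. \<exists>U g. x \<in> U \<and> Cinf_on U g \<and> (\<forall>y\<in>U \<inter> A. g y = h y))"

definition penalty_function :: "(real^'n \<Rightarrow> real) \<Rightarrow> bool" where
  "penalty_function h \<longleftrightarrow>
     continuous_on unit_simplex h \<and>
     (\<forall>S. S \<noteq> {} \<longrightarrow> smooth_on_set (face_relint S) h) \<and>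
     (\<exists>K>0. \<forall>x1\<in>unit_simplex. \<forall>x2\<in>unit_simplex. \<forall>t\<in>{0..1}.
        h (t *\<^sub>R x1 + (1 - t) *\<^sub>R x2)
          \<le> t * h x1 + (1 - t) * h x2 - K / 2 * t * (1 - t) * (norm (x1 - x2))\<^sup>2)"

definition choice_map :: "(real^'n \<Rightarrow> real) \<Rightarrow> real^'n \<Rightarrow> real^'n" where
  "choice_map h y = (THE x. x \<in> unit_simplex \<and> (\<forall>z\<in>unit_simplex. y \<bullet> z - h z \<le> y \<bullet> x - h x))"

definition conj_fun :: "(real^'n \<Rightarrow> real) \<Rightarrow> real^'n \<Rightarrow> real" where
  "conj_fun h y = (SUP x\<in>unit_simplex. y \<bullet> x - h x)"

definition fenchel_coupling :: "(real^'n \<Rightarrow> real) \<Rightarrow> real^'n \<Rightarrow> real^'n \<Rightarrow> real" where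
  "fenchel_coupling h p y = h p + conj_fun h y - y \<bullet> p"

definition simplex_p :: "real^'n \<Rightarrow> (real^'n) set" where
  "simplex_p p = {x \<in> unit_simplex. supp p \<subseteq> supp x}"

end

theory Submission
  imports Defs
begin

lemma us_comp_le1:
  assumes "x \<in> unit_simplex" shows "x $ i \<le> 1" "0 \<le> x $ i"
proof -
  have "x $ i \<le> (\<Sum>j\<in>UNIV. x $ j)"
    using assms by (intro member_le_sum) (auto simp: unit_simplex_def)
  then show "x $ i \<le> 1" using assms by (simp add: unit_simplex_def)
  show "0 \<le> x $ i" using assms by (simp add: unit_simplex_def)
qed

lemma compact_us: "compact (unit_simplex :: (real^'n) set)"
unfolding compact_eq_bounded_closed
proof (intro conjI)
  show "bounded (unit_simplex :: (real^'n) set)"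
  proof -
    have "norm x \<le> real CARD('n)" if "x \<in> unit_simplex" for x :: "real^'n"
    proof -
      have "norm x \<le> (\<Sum>i\<in>UNIV. \<bar>x $ i\<bar>)" by (rule norm_le_l1_cart)
      also have "\<dots> \<le> (\<Sum>i\<in>(UNIV::'n set). 1)"
        using us_comp_le1[OF that] by (intro sum_mono) auto
      finally show ?thesis by simp
    qed
    then show ?thesis unfolding bounded_iff by blast
  qed
  have "unit_simplex = {x::real^'n. \<forall>i. 0 \<le> x $ i} \<inter> {x. (\<Sum>i\<in>UNIV. x $ i) = 1}"
    by (auto simp: unit_simplex_def)
  moreover have "closed {x::real^'n. \<forall>i. 0 \<le> x $ i}"
    by (intro closed_Collect_all closed_Collect_le continuous_intros)
  moreover have "closed {x::real^'n. (\<Sum>i\<in>UNIV. x $ i) = 1}"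
    by (intro closed_Collect_eq continuous_intros)
  ultimately show "closed (unit_simplex :: (real^'n) set)" by (metis closed_Int)
qed

lemma us_convex:
  assumes "x1 \<in> unit_simplex" "x2 \<in> unit_simplex" "0 \<le> t" "t \<le> 1"
  shows "t *\<^sub>R x1 + (1 - t) *\<^sub>R x2 \<in> unit_simplex"
  using assms unfolding unit_simplex_def
  by (auto simp: sum.distrib sum_distrib_left[symmetric] intro!: add_nonneg_nonneg mult_nonneg_nonneg)

lemma aux:
  fixes a b c d hx1 hx2 yx1 yx2 N :: real
  shows "a - b \<le> yx1 - hx1 \<Longrightarrow> b \<le> 1/2 * hx1 + 1/2 * hx2 - N \<Longrightarrow> N > 0 \<Longrightarrow>
    yx1 - hx1 = yx2 - hx2 \<Longrightarrow> a = 1/2 * yx1 + 1/2 * yx2 \<Longrightarrow> False"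
  by linarith

lemma choice_map_prop:
  fixes h :: "real^'n \<Rightarrow> real"
  assumes "penalty_function h" "unit_simplex \<noteq> ({} :: (real^'n) set)"
  shows "choice_map h y \<in> unit_simplex \<and>
         (\<forall>z\<in>unit_simplex. y \<bullet> z - h z \<le> y \<bullet> choice_map h y - h (choice_map h y))"
proof -
  let ?P = "\<lambda>x. x \<in> unit_simplex \<and> (\<forall>z\<in>unit_simplex. y \<bullet> z - h z \<le> y \<bullet> x - h x)"
  have cont: "continuous_on unit_simplex (\<lambda>x. y \<bullet> x - h x)"
    using assms(1) unfolding penalty_function_def by (intro continuous_intros) auto
  obtain x where Px: "?P x"
    using continuous_attains_sup[OF compact_us assms(2) cont] by blast
  moreover have uniq: "x1 = x2" if "?P x1" "?P x2" for x1 x2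
  proof (rule ccontr)
    assume ne: "x1 \<noteq> x2"
    obtain K where K: "K > 0" and sc: "\<forall>x1\<in>unit_simplex. \<forall>x2\<in>unit_simplex. \<forall>t\<in>{0..1}.
        h (t *\<^sub>R x1 + (1 - t) *\<^sub>R x2)
          \<le> t * h x1 + (1 - t) * h x2 - K / 2 * t * (1 - t) * (norm (x1 - x2))\<^sup>2"
      using assms(1) unfolding penalty_function_def by blast
    let ?m = "(1/2) *\<^sub>R x1 + (1/2) *\<^sub>R x2"
    have e: "(1::real) - 1/2 = 1/2" by simp
    have m: "?m \<in> unit_simplex" using us_convex[of x1 x2 "1/2"] that by (simp only: e)
    have hm: "h ((1/2) *\<^sub>R x1 + (1 - 1/2) *\<^sub>R x2) \<le> 1/2 * h x1 + (1 - 1/2) * h x2 - K / 2 * (1/2) * (1 - 1/2) * (norm (x1 - x2))\<^sup>2"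
      by (rule sc[rule_format]) (use that in auto)
    have "norm (x1 - x2) > 0" using ne by simp
    then have pos: "K / 2 * (1/2) * (1 - 1/2) * (norm (x1 - x2))\<^sup>2 > 0" using K by simp
    have eq: "y \<bullet> x1 - h x1 = y \<bullet> x2 - h x2" using that by force
    have lin: "y \<bullet> ?m = 1/2 * (y \<bullet> x1) + 1/2 * (y \<bullet> x2)"
      by (simp add: inner_add_right)
    have le: "y \<bullet> ?m - h ?m \<le> y \<bullet> x1 - h x1" using that m by blast
    have hm2: "h ?m \<le> 1/2 * h x1 + 1/2 * h x2 - K / 2 * (1/2) * (1/2) * (norm (x1 - x2))\<^sup>2"
      using hm by (simp only: e)
    have pos2: "K / 2 * (1/2) * (1/2) * (norm (x1 - x2))\<^sup>2 > 0" using pos by (simp only: e)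
    show False using aux[OF le hm2 pos2 eq lin] .
  qed
  have "(THE x. ?P x) = x"
    by (rule the_equality[where P = ?P, OF Px]) (rule uniq[OF _ Px])
  then show ?thesis unfolding choice_map_def using Px by simp
qed

lemma supp_ne:
  assumes "p \<in> unit_simplex" shows "supp p \<noteq> {}"
proof
  assume "supp p = {}"
  then have "\<forall>i. p $ i = 0" by (auto simp: supp_def)
  then show False using assms by (simp add: unit_simplex_def)
qed

lemma F_bound:
  fixes h :: "real^'n \<Rightarrow> real"
  assumes ph: "penalty_function h" and p: "p \<in> unit_simplex"
    and B: "\<forall>x\<in>unit_simplex. \<bar>h x\<bar> \<le> B" and eps: "\<epsilon> > 0"
    and me: "\<epsilon> \<le> Min ((\<lambda>a. choice_map h y $ a) ` supp p)"
  shows "fenchel_coupling h p y \<le> 2 * B + 2 * B / \<epsilon>"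
proof -
  define x where "x = choice_map h y"
  have ne: "unit_simplex \<noteq> ({} :: (real^'n) set)" using p by blast
  have xs: "x \<in> unit_simplex" and xmax: "\<forall>z\<in>unit_simplex. y \<bullet> z - h z \<le> y \<bullet> x - h x"
    using choice_map_prop[OF ph ne, of y] unfolding x_def by auto
  have conj: "conj_fun h y = y \<bullet> x - h x"
    unfolding conj_fun_def using xs xmax by (intro cSup_eq_maximum) auto
  define m where "m = Min ((\<lambda>a. x $ a) ` supp p)"
  have me': "\<epsilon> \<le> m" using me unfolding m_def x_def .
  have mpos: "m > 0" using me' eps by linarith
  have mle: "m \<le> x $ a" if "a \<in> supp p" for a
    unfolding m_def using that by (intro Min_le) auto
  define z where "z = x + m *\<^sub>R (x - p)"
  have zs: "z \<in> unit_simplex"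
    unfolding unit_simplex_def mem_Collect_eq
  proof (intro conjI allI)
    fix i
    show "0 \<le> z $ i"
    proof (cases "i \<in> supp p")
      case True
      have "p $ i \<le> 1" by (rule us_comp_le1[OF p])
      moreover have "0 \<le> x $ i" by (rule us_comp_le1[OF xs])
      ultimately have "m * p $ i \<le> m" "0 \<le> m * x $ i"
        using mult_left_mono[of "p $ i" 1 m] mpos by auto
      moreover have "z $ i = x $ i + m * x $ i - m * p $ i" by (simp add: z_def algebra_simps)
      ultimately show ?thesis using mle[OF True] by linarith
    next
      case False
      then have "p $ i = 0" by (simp add: supp_def)
      then show ?thesis using us_comp_le1(2)[OF xs, of i] mpos by (simp add: z_def)
    qed
  next
    have "(\<Sum>i\<in>UNIV. z $ i) = (\<Sum>i\<in>UNIV. x $ i) + m * ((\<Sum>i\<in>UNIV. x $ i) - (\<Sum>i\<in>UNIV. p $ i))"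
      by (simp add: z_def sum.distrib sum_distrib_left sum_subtractf algebra_simps)
    then show "(\<Sum>i\<in>UNIV. z $ i) = 1" using xs p by (simp add: unit_simplex_def)
  qed
  have "y \<bullet> z - h z \<le> y \<bullet> x - h x" using xmax zs by blast
  moreover have "y \<bullet> z = y \<bullet> x + m * (y \<bullet> (x - p))" by (simp add: z_def inner_add_right)
  ultimately have "m * (y \<bullet> (x - p)) \<le> h z - h x" by linarith
  also have "\<dots> \<le> 2 * B" using B zs xs abs_le_iff by (metis (no_types, lifting) add_mono diff_conv_add_uminus mult_2 le_minus_iff)
  finally have a: "m * (y \<bullet> (x - p)) \<le> 2 * B" .
  have B0: "0 \<le> B" using B p by (meson abs_ge_zero order_trans)
  have "y \<bullet> (x - p) \<le> 2 * B / m" using a mpos by (simp add: field_simps mult.commute)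
  also have "\<dots> \<le> 2 * B / \<epsilon>" using B0 eps me' by (intro divide_left_mono) auto
  finally have b: "y \<bullet> (x - p) \<le> 2 * B / \<epsilon>" .
  have "fenchel_coupling h p y = h p - h x + y \<bullet> (x - p)"
    unfolding fenchel_coupling_def conj by (simp add: inner_diff_right)
  moreover have "h p \<le> B" "- h x \<le> B" using B p xs abs_le_iff by blast+
  ultimately show ?thesis using b by linarith
qed

theorem propositionC4:
  fixes h :: "real^'n \<Rightarrow> real" and p :: "real^'n" and y :: "nat \<Rightarrow> real^'n"
  assumes "penalty_function h"
    and "p \<in> unit_simplex"
    and "filterlim (\<lambda>j. fenchel_coupling h p (y j)) at_top sequentially"
  shows "\<not> (\<exists>x\<in>simplex_p p. \<exists>r::nat \<Rightarrow> nat. strict_mono r \<and>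
             ((\<lambda>j. choice_map h (y (r j))) \<longlongrightarrow> x) sequentially)
         \<and> liminf (\<lambda>j. ereal (Min ((\<lambda>a. choice_map h (y j) $ a) ` supp p))) = 0"
proof -
  note ph = assms(1) and p = assms(2) and F = assms(3)
  have ne: "unit_simplex \<noteq> ({} :: (real^'n) set)" using p by blast
  have "compact (h ` unit_simplex)"
    using ph compact_us unfolding penalty_function_def by (intro compact_continuous_image) auto
  then have "bounded (h ` unit_simplex)" by (rule compact_imp_bounded)
  then obtain B where B0: "\<forall>z\<in>h ` unit_simplex. norm z \<le> B"
    unfolding bounded_iff by (elim exE) (rule that)
  have B: "\<forall>x\<in>unit_simplex. \<bar>h x\<bar> \<le> B" using B0 by simp
  have spne: "supp p \<noteq> {}" by (rule supp_ne[OF p])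
  have spfin: "finite (supp p)" by simp
  define m where "m j = Min ((\<lambda>a. choice_map h (y j) $ a) ` supp p)" for j
  have m0: "0 \<le> m j" for j
  proof -
    have cs: "choice_map h (y j) \<in> unit_simplex" using choice_map_prop[OF ph ne] by blast
    show ?thesis unfolding m_def using spne spfin us_comp_le1(2)[OF cs] by (subst Min_ge_iff) auto
  qed
  have lim: "m \<longlonglongrightarrow> 0"
    unfolding lim_sequentially
  proof (intro allI impI)
    fix e :: real assume e: "0 < e"
    have "eventually (\<lambda>j. 2 * B + 2 * B / e + 1 \<le> fenchel_coupling h p (y j)) sequentially"
      using F unfolding filterlim_at_top by blast
    then obtain N where N: "\<And>n. n \<ge> N \<Longrightarrow> 2 * B + 2 * B / e + 1 \<le> fenchel_coupling h p (y n)"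
      unfolding eventually_sequentially by blast
    have "dist (m n) 0 < e" if "n \<ge> N" for n
    proof (cases "e \<le> m n")
      case True
      have "fenchel_coupling h p (y n) \<le> 2 * B + 2 * B / e"
        by (rule F_bound[OF ph p B e]) (use True in \<open>simp add: m_def\<close>)
      then show ?thesis using N[OF that] by linarith
    next
      case False
      then show ?thesis using m0[of n] by simp
    qed
    then show "\<exists>no. \<forall>n\<ge>no. dist (m n) 0 < e" by blast
  qed
  have part2: "liminf (\<lambda>j. ereal (Min ((\<lambda>a. choice_map h (y j) $ a) ` supp p))) = 0"
  proof -
    have "(\<lambda>j. ereal (Min ((\<lambda>a. choice_map h (y j) $ a) ` supp p))) = (\<lambda>j. ereal (m j))"
      by (simp add: m_def)
    moreover have "liminf (\<lambda>j. ereal (m j)) = ereal 0"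
      by (rule lim_imp_Liminf[OF trivial_limit_sequentially tendsto_ereal[OF lim]])
    ultimately show ?thesis by (simp add: zero_ereal_def)
  qed
  have part1: "\<not> (\<exists>x\<in>simplex_p p. \<exists>r::nat \<Rightarrow> nat. strict_mono r \<and>
             ((\<lambda>j. choice_map h (y (r j))) \<longlongrightarrow> x) sequentially)"
  proof
    assume "\<exists>x\<in>simplex_p p. \<exists>r::nat \<Rightarrow> nat. strict_mono r \<and>
             ((\<lambda>j. choice_map h (y (r j))) \<longlongrightarrow> x) sequentially"
    then obtain x r where xs: "x \<in> simplex_p p" and r: "strict_mono r"
      and conv: "((\<lambda>j. choice_map h (y (r j))) \<longlongrightarrow> x) sequentially" by blast
    define c where "c = Min ((\<lambda>a. x $ a) ` supp p)"
    have xpos: "x $ a > 0" if "a \<in> supp p" for a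
    proof -
      have "x \<in> unit_simplex" "supp p \<subseteq> supp x" using xs by (auto simp: simplex_p_def)
      then show ?thesis using that us_comp_le1(2)[of x a] by (force simp: supp_def)
    qed
    have cpos: "c > 0" unfolding c_def using spne spfin xpos by (subst Min_gr_iff) auto
    have ev1: "eventually (\<lambda>j. \<forall>a\<in>supp p. choice_map h (y (r j)) $ a > c / 2) sequentially"
    proof (rule eventually_ball_finite[OF spfin], intro ballI)
      fix a assume a: "a \<in> supp p"
      have "c \<le> x $ a" unfolding c_def using a spfin by (intro Min_le) auto
      then have "c / 2 < x $ a" using cpos by linarith
      then show "eventually (\<lambda>j. choice_map h (y (r j)) $ a > c / 2) sequentially"
        using order_tendstoD(1)[OF tendsto_vec_nth[OF conv]] by blast
    qed
    have ev2: "eventually (\<lambda>j. m (r j) < c / 2) sequentially"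
      using order_tendstoD(2)[OF LIMSEQ_subseq_LIMSEQ[OF lim r], of "c / 2"] cpos by (simp add: o_def)
    have pt: "False" if h1: "\<forall>a\<in>supp p. choice_map h (y (r j)) $ a > c / 2"
      and h2: "m (r j) < c / 2" for j
    proof -
      have "m (r j) \<in> (\<lambda>a. choice_map h (y (r j)) $ a) ` supp p"
        unfolding m_def by (rule Min_in) (simp_all add: spne)
      then have "c / 2 < m (r j)" using h1 by auto
      then show False using h2 by linarith
    qed
    have "eventually (\<lambda>j. False) sequentially"
      using eventually_conj[OF ev1 ev2] by (rule eventually_mono) (metis pt)
    then show False by simp
  qed
  show ?thesis using part1 part2 by (rule conjI)
qed

end
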